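(* Let $\varphi\colon \mathbb{C}^*\times\mathbb{C}^n\to\mathbb{C}^n$ be a holomorphic action of $\mathbb{C}^*$ on $\mathbb{C}^n$ having $p\in\mathbb{C}^n$ as a fixed point, and let $\psi\colon\mathbb{C}^*\times\mathbb{C}^n\to\mathbb{C}^n$ be the action by linear transformations defined by the derivative of $\varphi$ at $p$, i.e. $\psi^z(x)=D\varphi^z(p)\cdot x$. Then there is an entire (holomorphic on all of $\mathbb{C}^n$) map $F\colon\mathbb{C}^n\to\mathbb{C}^n$ such that $F(p)=0$ and $$\psi^z\circ F\equiv F\circ\varphi^z\quad\text{for each } z\in\mathbb{C}^*.$$ Moreover, there is a $\varphi$-invariant open set $W\ni p$ in $\mathbb{C}^n$ such that $F|_W\colon W\to F(W)$ is a biholomorphism.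
   Context: A holomorphic action of $\mathbb{C}^*$ on a complex manifold $M$ is a holomorphic map $\varphi\colon\mathbb{C}^*\times M\to M$ with $\varphi(1,x)=x$ and $\varphi(zw,x)=\varphi(z,\varphi(w,x))$. For $z\in\mathbb{C}^*$ write $\varphi^z=\varphi(z,\cdot)$. A fixed point $p$ satisfies $\varphi^z(p)=p$ for all $z$. Here $D\varphi^z(p)$ is the complex derivative (Jacobian matrix) of $\varphi^z$ at $p$, and $\psi^z=\psi(z,\cdot)$. *)

theory Defs
  imports "HOL-Analysis.Analysis"
begin

text \<open>Holomorphic maps between open subsets of complex coordinate spaces, modelled as
  real-Frechet-differentiable maps whose derivative at every point is complex-linear.\<close>

definition holo_vec :: "(complex^'n) set \<Rightarrow> (complex^'n \<Rightarrow> complex^'m) \<Rightarrow> bool" where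
  "holo_vec S f \<longleftrightarrow>
     (\<forall>x\<in>S. \<exists>L. (f has_derivative L) (at x) \<and> (\<forall>(c::complex) v. L (c *s v) = c *s L v))"

definition holo_prod :: "(complex \<times> (complex^'n)) set \<Rightarrow> (complex \<times> (complex^'n) \<Rightarrow> complex^'m) \<Rightarrow> bool" where
  "holo_prod S f \<longleftrightarrow>
     (\<forall>q\<in>S. \<exists>L. (f has_derivative L) (at q) \<and>
        (\<forall>(c::complex) a v. L (c * a, c *s v) = c *s L (a, v)))"

definition holo_Cstar_action :: "(complex \<Rightarrow> complex^'n \<Rightarrow> complex^'n) \<Rightarrow> bool" where
  "holo_Cstar_action \<phi> \<longleftrightarrow>
     holo_prod ((- {0}) \<times> UNIV) (\<lambda>(z, x). \<phi> z x) \<and>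
     (\<forall>x. \<phi> 1 x = x) \<and>
     (\<forall>z w x. z \<noteq> 0 \<longrightarrow> w \<noteq> 0 \<longrightarrow> \<phi> (z * w) x = \<phi> z (\<phi> w x))"

end

theory Submission
  imports Defs "HOL-Complex_Analysis.Complex_Analysis"
begin

lemma bounded_linear_smult_vec: "bounded_linear (\<lambda>y::complex^'n. c *s y)"
proof -
  have "linear (\<lambda>y::complex^'n. c *s y)"
    by (rule linearI) (auto simp: vec_eq_iff algebra_simps scaleR_conv_of_real)
  then show ?thesis using linear_conv_bounded_linear by blast
qed

lemma has_derivative_vec_field:
  fixes g :: "complex \<Rightarrow> complex^'n"
  assumes "(g has_derivative (\<lambda>a. a *s d)) (at z)"
  shows "((\<lambda>w. g w $ i) has_field_derivative d $ i) (at z)"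
proof -
  have "((\<lambda>w. g w $ i) has_derivative (\<lambda>a. (a *s d) $ i)) (at z)"
    using bounded_linear.has_derivative[OF bounded_linear_vec_nth assms] .
  moreover have "(\<lambda>a. (a *s d) $ i) = (*) (d $ i)" by (auto simp: fun_eq_iff mult.commute)
  ultimately show ?thesis by (simp add: has_field_derivative_def)
qed

locale cact =
  fixes \<phi> :: "complex \<Rightarrow> complex^'n \<Rightarrow> complex^'n" and p :: "complex^'n"
  assumes act: "holo_Cstar_action \<phi>"
    and fixp: "\<And>z. z \<noteq> 0 \<Longrightarrow> \<phi> z p = p"
begin

definition Phi where "Phi = (\<lambda>(z, x). \<phi> z x)"

definition Lq where "Lq q = (SOME L. (Phi has_derivative L) (at q) \<and>
        (\<forall>(c::complex) a v. L (c * a, c *s v) = c *s L (a, v)))"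

lemma Lq: assumes "z \<noteq> 0"
  shows "(Phi has_derivative Lq (z,x)) (at (z,x))"
    and "Lq (z,x) (c * a, c *s v) = c *s Lq (z,x) (a, v)"
proof -
  have "\<exists>L. (Phi has_derivative L) (at (z,x)) \<and>
        (\<forall>(c::complex) a v. L (c * a, c *s v) = c *s L (a, v))"
    using act assms unfolding holo_Cstar_action_def holo_prod_def Phi_def by auto
  from someI_ex[OF this] show "(Phi has_derivative Lq (z,x)) (at (z,x))"
    "Lq (z,x) (c * a, c *s v) = c *s Lq (z,x) (a, v)"
    unfolding Lq_def by auto
qed

lemma Lq_lin: assumes "z \<noteq> 0" shows "bounded_linear (Lq (z,x))"
  using Lq(1)[OF assms] has_derivative_bounded_linear by blast

lemma Lq_split: assumes "z \<noteq> 0"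
  shows "Lq (z,x) (a, v) = a *s Lq (z,x) (1, 0) + Lq (z,x) (0, v)"
proof -
  have lin: "linear (Lq (z,x))" using Lq_lin[OF assms] bounded_linear.linear by blast
  have "Lq (z,x) (a, v) = Lq (z,x) ((a,0) + (0,v))" by simp
  also have "\<dots> = Lq (z,x) (a,0) + Lq (z,x) (0,v)" by (rule linear_add[OF lin])
  finally have e1: "Lq (z,x) (a, v) = Lq (z,x) (a,0) + Lq (z,x) (0,v)" .
  have e2: "Lq (z,x) (a * 1, a *s 0) = a *s Lq (z,x) (1,0)" by (rule Lq(2)[OF assms])
  have "(a * 1, a *s (0::complex^'n)) = (a, 0)" by (simp add: vec_eq_iff)
  with e1 e2 show ?thesis by simp
qed

lemma phi_x_deriv0: assumes "z \<noteq> 0"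
  shows "(\<phi> z has_derivative (\<lambda>v. Lq (z,x) (0,v))) (at x)"
proof -
  have "((\<lambda>y. (z,y)) has_derivative (\<lambda>v. (0,v))) (at x)"
    by (auto intro!: derivative_eq_intros)
  from has_derivative_compose[OF this Lq(1)[OF assms]]
  show ?thesis by (simp add: Phi_def o_def)
qed

lemma phi_z_deriv: assumes "z \<noteq> 0"
  shows "((\<lambda>w. \<phi> w x) has_derivative (\<lambda>a. a *s Lq (z,x) (1,0))) (at z)"
proof -
  have "((\<lambda>w. (w,x)) has_derivative (\<lambda>a. (a,0))) (at z)"
    by (rule has_derivative_Pair[OF has_derivative_ident has_derivative_const])
  from has_derivative_compose[OF this Lq(1)[OF assms]]
  have "((\<lambda>w. \<phi> w x) has_derivative (\<lambda>a. Lq (z,x) (a,0))) (at z)" by (simp add: Phi_def)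
  moreover have "(\<lambda>a. Lq (z,x) (a,0)) = (\<lambda>a. a *s Lq (z,x) (1,0))"
  proof
    fix a :: complex
    have "(a * 1, a *s (0::complex^'n)) = (a, 0)" by (simp add: vec_eq_iff)
    then show "Lq (z,x) (a,0) = a *s Lq (z,x) (1,0)" using Lq(2)[OF assms, of x a 1 0] by simp
  qed
  ultimately show ?thesis by simp
qed

lemma DXlin: assumes "z \<noteq> 0" shows "bounded_linear (\<lambda>v. Lq (z,x) (0,v))"
  using phi_x_deriv0[OF assms] has_derivative_bounded_linear by blast

definition DX where "DX z x = Blinfun (\<lambda>v. Lq (z,x) (0,v))"

lemma DX_apply: "z \<noteq> 0 \<Longrightarrow> blinfun_apply (DX z x) v = Lq (z,x) (0,v)"
  unfolding DX_def using DXlin bounded_linear_Blinfun_apply by metis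

lemma phi_x_deriv: assumes "z \<noteq> 0" shows "(\<phi> z has_derivative blinfun_apply (DX z x)) (at x)"
proof -
  have "blinfun_apply (DX z x) = (\<lambda>v. Lq (z,x) (0,v))" using DX_apply[OF assms] by auto
  then show ?thesis using phi_x_deriv0[OF assms] by simp
qed

lemma DX_homog: "z \<noteq> 0 \<Longrightarrow> DX z x (c *s v) = c *s DX z x v"
  using Lq(2)[of z x c 0 v] by (simp add: DX_apply)

definition DZ where "DZ z x = Lq (z,x) (1,0)"

lemma phi_z_deriv': "z \<noteq> 0 \<Longrightarrow> ((\<lambda>w. \<phi> w x) has_derivative (\<lambda>a. a *s DZ z x)) (at z)"
  unfolding DZ_def by (rule phi_z_deriv)

lemma Phi_cont: "continuous_on ((- {0}) \<times> UNIV) Phi"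
proof (rule continuous_at_imp_continuous_on, rule ballI)
  fix q assume "q \<in> (- {0::complex}) \<times> (UNIV :: (complex^'n) set)"
  then obtain z x where q: "q = (z,x)" "z \<noteq> 0" by auto
  show "isCont Phi q" using Lq(1)[OF q(2), of x] has_derivative_continuous q(1) by blast
qed

lemma phi_cont2:
  assumes "continuous_on S f" "continuous_on S g" "\<And>s. s \<in> S \<Longrightarrow> f s \<noteq> 0"
  shows "continuous_on S (\<lambda>s. \<phi> (f s) (g s))"
proof -
  have "continuous_on S (Phi \<circ> (\<lambda>s. (f s, g s)))"
    by (rule continuous_on_compose[OF continuous_on_Pair[OF assms(1,2)]],
        rule continuous_on_subset[OF Phi_cont]) (use assms(3) in auto)
  then show ?thesis by (simp add: o_def Phi_def)
qed

lemma phi_1: "\<phi> 1 x = x" using act unfolding holo_Cstar_action_def by auto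
lemma phi_mult: "z \<noteq> 0 \<Longrightarrow> w \<noteq> 0 \<Longrightarrow> \<phi> (z * w) x = \<phi> z (\<phi> w x)"
  using act unfolding holo_Cstar_action_def by blast

lemma phi_inv: "z \<noteq> 0 \<Longrightarrow> \<phi> (inverse z) (\<phi> z x) = x"
proof -
  assume z: "z \<noteq> 0"
  have "\<phi> (inverse z * z) x = \<phi> (inverse z) (\<phi> z x)" by (rule phi_mult) (use z in auto)
  moreover have "inverse z * z = 1" using z by simp
  ultimately show ?thesis using phi_1 by simp
qed

lemma phi_inv': "z \<noteq> 0 \<Longrightarrow> \<phi> z (\<phi> (inverse z) x) = x"
proof -
  assume z: "z \<noteq> 0"
  have "\<phi> (z * inverse z) x = \<phi> z (\<phi> (inverse z) x)" by (rule phi_mult) (use z in auto)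
  moreover have "z * inverse z = 1" using z by simp
  ultimately show ?thesis using phi_1 by simp
qed

lemma DX_mult: assumes "z \<noteq> 0" "w \<noteq> 0"
  shows "DX (z*w) x = DX z (\<phi> w x) o\<^sub>L DX w x"
proof -
  have 1: "(\<phi> (z*w) has_derivative blinfun_apply (DX (z*w) x)) (at x)" using assms by (simp add: phi_x_deriv)
  have "(\<phi> z \<circ> \<phi> w has_derivative (blinfun_apply (DX z (\<phi> w x)) \<circ> blinfun_apply (DX w x))) (at x)"
    by (rule diff_chain_at[OF phi_x_deriv phi_x_deriv]) (use assms in auto)
  moreover have "\<phi> z \<circ> \<phi> w = \<phi> (z*w)" by (rule ext) (simp only: o_apply phi_mult[OF assms])
  ultimately have 2: "(\<phi> (z*w) has_derivative (blinfun_apply (DX z (\<phi> w x)) \<circ> blinfun_apply (DX w x))) (at x)"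
    by simp
  have "blinfun_apply (DX (z*w) x) = blinfun_apply (DX z (\<phi> w x)) \<circ> blinfun_apply (DX w x)"
    by (rule has_derivative_unique[OF 1 2])
  then show ?thesis by (intro blinfun_eqI) (simp add: fun_eq_iff)
qed

lemma DX_1: "DX 1 x = id_blinfun"
proof -
  have 1: "(\<phi> 1 has_derivative blinfun_apply (DX 1 x)) (at x)" by (simp add: phi_x_deriv)
  have "\<phi> 1 = (\<lambda>x. x)" using phi_1 by auto
  then have 2: "(\<phi> 1 has_derivative (\<lambda>x. x)) (at x)" by (simp add: has_derivative_ident)
  have "blinfun_apply (DX 1 x) = (\<lambda>x. x)" by (rule has_derivative_unique[OF 1 2])
  then show ?thesis by (intro blinfun_eqI) (simp add: fun_eq_iff)
qed

definition PS where "PS z = DX z p"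

lemma PS_mult: assumes "z \<noteq> 0" "w \<noteq> 0" shows "PS (z*w) = PS z o\<^sub>L PS w"
  unfolding PS_def using DX_mult[OF assms, of p] fixp[OF assms(2)] by simp

lemma PS_1: "PS 1 = id_blinfun" unfolding PS_def by (rule DX_1)

lemma PS_homog: "z \<noteq> 0 \<Longrightarrow> PS z (c *s v) = c *s PS z v"
  unfolding PS_def by (rule DX_homog)

lemma PS_mult_apply: assumes "z \<noteq> 0" "w \<noteq> 0" shows "PS (z*w) v = PS z (PS w v)"
  unfolding PS_mult[OF assms] by (simp only: blinfun_apply_blinfun_compose)

lemma PS_inv: assumes "z \<noteq> 0" shows "PS (inverse z) (PS z v) = v"
proof -
  have "PS (inverse z * z) v = PS (inverse z) (PS z v)" by (rule PS_mult_apply) (use assms in auto)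
  moreover have "inverse z * z = 1" using assms by simp
  ultimately show ?thesis using PS_1 by simp
qed

lemma PS_inv': assumes "z \<noteq> 0" shows "PS z (PS (inverse z) v) = v"
  using PS_inv[of "inverse z"] assms by simp

end

definition E :: "real \<Rightarrow> complex" where "E \<theta> = exp (2 * of_real pi * \<i> * of_real \<theta>)"

lemma E_nz[simp]: "E t \<noteq> 0" by (simp add: E_def)
lemma norm_E[simp]: "norm (E t) = 1" by (simp add: E_def norm_exp_eq_Re)
lemma E_add: "E (a + b) = E a * E b" by (simp add: E_def distrib_left exp_add)
lemma E_minus: "E (- a) = inverse (E a)" by (simp add: E_def exp_minus)
lemma E_0[simp]: "E 0 = 1" by (simp add: E_def)
lemma E_1[simp]: "E 1 = 1" by (simp add: E_def)
lemma cont_E[continuous_intros]: "continuous_on S E" unfolding E_def by (intro continuous_intros)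
lemma cont_E'[continuous_intros]: "continuous_on S f \<Longrightarrow> continuous_on S (\<lambda>x. E (f x))"
  using continuous_on_compose2[OF cont_E, of S f UNIV] by auto

lemma continuous_on_vec_smult:
  fixes g :: "'a::topological_space \<Rightarrow> complex^'n"
  assumes "continuous_on S g" "continuous_on S f"
  shows "continuous_on S (\<lambda>x. f x *s g x)"
  unfolding vector_scalar_mult_def
  by (intro continuous_on_vec_lambda continuous_intros continuous_on_component assms)

lemma cauchy_deriv_int:
  fixes f :: "complex \<Rightarrow> complex"
  assumes hol: "f holomorphic_on S" and S: "open S" "cball c r \<subseteq> S" and r: "r > 0"
  shows "deriv f c = integral {0..1} (\<lambda>\<theta>. f (c + r * E \<theta>) / (r * E \<theta>))"
proof -
  have cont: "continuous_on (cball c r) f"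
    using holomorphic_on_imp_continuous_on[OF hol] continuous_on_subset S by blast
  have hb: "f holomorphic_on ball c r" using hol S ball_subset_cball holomorphic_on_subset by blast
  have "c \<in> ball c r" using r by simp
  from Cauchy_derivative_integral_circlepath(2)[OF cont hb this]
  have "deriv f c = 1 / (2 * of_real pi * \<i>) * contour_integral (circlepath c r) (\<lambda>u. f u / (u - c)\<^sup>2)"
    by (rule DERIV_imp_deriv)
  also have "contour_integral (circlepath c r) (\<lambda>u. f u / (u - c)\<^sup>2) =
      integral {0..1} (\<lambda>\<theta>. (2 * of_real pi * \<i>) * (f (c + r * E \<theta>) / (r * E \<theta>)))"
    unfolding contour_integral_integral
  proof (rule integral_cong)
    fix \<theta> :: real
    have "f (circlepath c r \<theta>) / (circlepath c r \<theta> - c)\<^sup>2 * vector_derivative (circlepath c r) (at \<theta>)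
       = f (c + r * E \<theta>) / (r * E \<theta>)^2 * (2 * of_real pi * \<i> * r * E \<theta>)"
      by (simp only: vector_derivative_circlepath) (simp add: circlepath E_def)
    also have "\<dots> = (2 * of_real pi * \<i>) * (f (c + r * E \<theta>) / (r * E \<theta>))"
      using r by (simp add: power2_eq_square field_simps)
    finally show "f (circlepath c r \<theta>) / (circlepath c r \<theta> - c)\<^sup>2 * vector_derivative (circlepath c r) (at \<theta>)
       = (2 * of_real pi * \<i>) * (f (c + r * E \<theta>) / (r * E \<theta>))" .
  qed
  also have "\<dots> = (2 * of_real pi * \<i>) * integral {0..1} (\<lambda>\<theta>. f (c + r * E \<theta>) / (r * E \<theta>))"
    by (rule integral_mult_right)
  finally show ?thesis by simp
qed

lemma cauchy_deriv_vec:
  fixes g :: "complex \<Rightarrow> complex^'n"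
  assumes S: "open S" "cball c r \<subseteq> S" and r: "r > 0"
    and der: "\<And>t. t \<in> S \<Longrightarrow> (g has_derivative (\<lambda>a. a *s d t)) (at t)"
  shows "d c = integral {0..1} (\<lambda>\<theta>. (1 / (r * E \<theta>)) *s g (c + r * E \<theta>))"
proof -
  have contg: "continuous_on S g"
    using der has_derivative_continuous continuous_at_imp_continuous_on by blast
  have inS: "c + r * E \<theta> \<in> S" for \<theta>
  proof -
    have "dist c (c + r * E \<theta>) = r" using r by (simp add: dist_norm norm_mult)
    then show ?thesis using S by auto
  qed
  have contI: "continuous_on {0..1} (\<lambda>\<theta>. (1 / (r * E \<theta>)) *s g (c + r * E \<theta>))"
  proof -
    have "continuous_on {0..1} (\<lambda>\<theta>. g (c + r * E \<theta>))"
      by (rule continuous_on_compose2[OF contg]) (auto intro!: continuous_intros simp: inS)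
    moreover have "continuous_on {0..1} (\<lambda>\<theta>. 1 / (r * E \<theta>))"
      using r by (intro continuous_intros) auto
    ultimately show ?thesis
      by (rule continuous_on_vec_smult)
  qed
  have int: "(\<lambda>\<theta>. (1 / (r * E \<theta>)) *s g (c + r * E \<theta>)) integrable_on {0..1}"
    using integrable_continuous_real[OF contI] by simp
  show ?thesis
  proof (subst vec_eq_iff, rule allI)
    fix i
    have hol: "(\<lambda>t. g t $ i) holomorphic_on S"
      unfolding holomorphic_on_def
    proof
      fix t assume "t \<in> S"
      have "((\<lambda>t. g t $ i) has_field_derivative d t $ i) (at t)"
        by (rule has_derivative_vec_field[OF der[OF \<open>t \<in> S\<close>]])
      then show "(\<lambda>t. g t $ i) field_differentiable at t within S"
        unfolding field_differentiable_def using has_field_derivative_at_within by blast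
    qed
    have "d c $ i = deriv (\<lambda>t. g t $ i) c"
    proof -
      have "c \<in> S" using S r by (meson centre_in_cball less_imp_le subsetD)
      then show ?thesis using has_derivative_vec_field[OF der] by (intro DERIV_imp_deriv[symmetric])
    qed
    also have "\<dots> = integral {0..1} (\<lambda>\<theta>. g (c + r * E \<theta>) $ i / (r * E \<theta>))"
      by (rule cauchy_deriv_int[OF hol S r])
    also have "\<dots> = integral {0..1} (\<lambda>\<theta>. ((1 / (r * E \<theta>)) *s g (c + r * E \<theta>)) $ i)"
      by (simp add: field_simps)
    also have "\<dots> = integral {0..1} (\<lambda>\<theta>. (1 / (r * E \<theta>)) *s g (c + r * E \<theta>)) $ i"
      using integral_linear[OF int bounded_linear_vec_nth[of i]] by (simp add: o_def)
    finally show "d c $ i = integral {0..1} (\<lambda>\<theta>. (1 / (r * E \<theta>)) *s g (c + r * E \<theta>)) $ i" .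
  qed
qed


lemma bl_smult_left: "bounded_linear (\<lambda>a::complex. a *s (w::complex^'n))"
proof -
  have "linear (\<lambda>a::complex. a *s (w::complex^'n))"
    by (rule linearI) (simp_all add: vec_eq_iff distrib_right mult_scaleR_left)
  then show ?thesis using linear_conv_bounded_linear by blast
qed

lemma smult_has_derivative: "((\<lambda>t::complex. x + t *s v) has_derivative (\<lambda>a. a *s (v::complex^'n))) (at t)"
proof -
  have "((\<lambda>t::complex. t *s v) has_derivative (\<lambda>a. a *s (v::complex^'n))) (at t)"
    by (rule bounded_linear_imp_has_derivative[OF bl_smult_left])
  then show ?thesis by (intro derivative_eq_intros) auto
qed

context cact begin

lemma DX_int: assumes z: "z \<noteq> 0"
  shows "DX z x v = integral {0..1} (\<lambda>\<theta>. (1 / E \<theta>) *s \<phi> z (x + E \<theta> *s v))"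
proof -
  have der: "((\<lambda>t. \<phi> z (x + t *s v)) has_derivative (\<lambda>a. a *s DX z (x + t *s v) v)) (at t)" for t
  proof -
    have "((\<phi> z \<circ> (\<lambda>t. x + t *s v)) has_derivative (blinfun_apply (DX z (x + t *s v)) \<circ> (\<lambda>a. a *s v))) (at t)"
      by (rule diff_chain_at[OF smult_has_derivative phi_x_deriv[OF z]])
    then show ?thesis by (simp add: o_def DX_homog[OF z])
  qed
  have "DX z (x + 0 *s v) v = integral {0..1} (\<lambda>\<theta>. (1 / (1 * E \<theta>)) *s \<phi> z (x + (0 + 1 * E \<theta>) *s v))"
    using cauchy_deriv_vec[where S=UNIV and g="\<lambda>t. \<phi> z (x + t *s v)" and d="\<lambda>t. DX z (x + t *s v) v"
        and c=0 and r=1, OF open_UNIV subset_UNIV zero_less_one der] by simp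
  then show ?thesis by simp
qed

lemma DZ_int: assumes z: "z \<noteq> 0" and r: "0 < r" "r < norm z"
  shows "DZ z x = integral {0..1} (\<lambda>\<theta>. (1 / (r * E \<theta>)) *s \<phi> (z + r * E \<theta>) x)"
proof -
  have sub: "cball z r \<subseteq> - {0}" using r by (auto simp: dist_norm)
  show ?thesis
    using cauchy_deriv_vec[where S="- {0}" and g="\<lambda>t. \<phi> t x" and d="\<lambda>t. DZ t x", OF _ sub r(1) phi_z_deriv'] by auto
qed

lemma cont_int_DX:
  "continuous_on (((- {0}) \<times> UNIV) \<times> cbox 0 1) (\<lambda>(q, \<theta>). (1 / E \<theta>) *s \<phi> (fst q) (snd q + E \<theta> *s v))"
proof -
  have "continuous_on (((- {0}) \<times> UNIV) \<times> cbox 0 1) (\<lambda>w. (1 / E (snd w)) *s \<phi> (fst (fst w)) (snd (fst w) + E (snd w) *s v))"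
    by (intro continuous_on_vec_smult phi_cont2 continuous_intros) auto
  then show ?thesis by (simp add: case_prod_beta)
qed

lemma DX_cont_v: "continuous_on ((- {0}) \<times> UNIV) (\<lambda>q. DX (fst q) (snd q) v)"
proof -
  have "continuous_on ((- {0}) \<times> UNIV) (\<lambda>q. integral (cbox 0 1) (\<lambda>\<theta>. (1 / E \<theta>) *s \<phi> (fst q) (snd q + E \<theta> *s v)))"
    using integral_continuous_on_param[OF cont_int_DX[of v]] by simp
  then show ?thesis
  proof (rule continuous_on_eq)
    fix q :: "complex \<times> (complex^'n)" assume "q \<in> (- {0}) \<times> UNIV"
    then have "fst q \<noteq> 0" by auto
    then show "integral (cbox 0 1) (\<lambda>\<theta>. (1 / E \<theta>) *s \<phi> (fst q) (snd q + E \<theta> *s v)) = DX (fst q) (snd q) v"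
      by (simp add: DX_int)
  qed
qed

lemma DX_cont: "continuous_on ((- {0}) \<times> UNIV) (\<lambda>q. DX (fst q) (snd q))"
  by (rule continuous_on_blinfun_componentwise) (rule DX_cont_v)

lemma DZ_cont: "continuous_on ((- {0}) \<times> UNIV) (\<lambda>q. DZ (fst q) (snd q))"
proof (rule continuous_at_imp_continuous_on, rule ballI)
  fix q0 assume "q0 \<in> (- {0::complex}) \<times> (UNIV :: (complex^'n) set)"
  then obtain z0 x0 where q0: "q0 = (z0, x0)" "z0 \<noteq> 0" by auto
  define r where "r = norm z0 / 2"
  have r: "r > 0" using q0 by (simp add: r_def)
  define U0 where "U0 = ball z0 r \<times> (UNIV :: (complex^'n) set)"
  have zU: "fst q \<noteq> 0" "r < norm (fst q)" if "q \<in> U0" for q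
  proof -
    have "norm z0 \<le> norm (fst q) + norm (z0 - fst q)" by (rule norm_triangle_sub)
    moreover have "norm (z0 - fst q) < r" using that by (auto simp: U0_def dist_norm)
    ultimately show "r < norm (fst q)" unfolding r_def by linarith
    then show "fst q \<noteq> 0" using r by auto
  qed
  have "continuous_on U0 (\<lambda>q. integral (cbox 0 1) (\<lambda>\<theta>. (1 / (r * E \<theta>)) *s \<phi> (fst q + r * E \<theta>) (snd q)))"
  proof (rule integral_continuous_on_param)
    have nz: "fst (fst w) + r * E (snd w) \<noteq> 0" if "w \<in> U0 \<times> cbox 0 1" for w
    proof
      assume "fst (fst w) + r * E (snd w) = 0"
      then have "fst (fst w) = - (r * E (snd w))" by (simp add: eq_neg_iff_add_eq_0)
      then have "norm (fst (fst w)) = r" using r by (simp add: norm_mult)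
      then show False using zU[of "fst w"] that by auto
    qed
    have "continuous_on (U0 \<times> cbox 0 1) (\<lambda>w. (1 / (r * E (snd w))) *s \<phi> (fst (fst w) + r * E (snd w)) (snd (fst w)))"
      using r nz by (intro continuous_on_vec_smult phi_cont2 continuous_intros) auto
    then show "continuous_on (U0 \<times> cbox 0 1) (\<lambda>(q, \<theta>). (1 / (r * E \<theta>)) *s \<phi> (fst q + r * E \<theta>) (snd q))"
      by (simp add: case_prod_beta)
  qed
  then have "continuous_on U0 (\<lambda>q. DZ (fst q) (snd q))"
  proof (rule continuous_on_eq)
    fix q :: "complex \<times> (complex^'n)" assume "q \<in> U0"
    then show "integral (cbox 0 1) (\<lambda>\<theta>. (1 / (r * E \<theta>)) *s \<phi> (fst q + r * E \<theta>) (snd q)) = DZ (fst q) (snd q)"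
      using zU r by (simp add: DZ_int)
  qed
  moreover have "open U0" "q0 \<in> U0" using r by (auto simp: U0_def q0 open_Times)
  ultimately show "isCont (\<lambda>q. DZ (fst q) (snd q)) q0"
    using continuous_on_eq_continuous_at by blast
qed

end

lemma smult_comm: "c *s (a *s (w::complex^'n)) = a *s (c *s w)"
  by (simp add: vec_eq_iff algebra_simps)

lemma integral_smult_vec:
  fixes h :: "real \<Rightarrow> complex^'n"
  assumes "h integrable_on S"
  shows "integral S (\<lambda>t. c *s h t) = c *s integral S h"
  using integral_linear[OF assms bounded_linear_smult_vec[of c]] by (simp add: o_def)

context cact begin

definition dPS where "dPS z v = integral {0..1} (\<lambda>\<theta>. (1 / E \<theta>) *s DZ z (p + E \<theta> *s v))"

lemma PS_deriv: assumes z0: "z0 \<noteq> 0"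
  shows "((\<lambda>z. PS z v) has_derivative (\<lambda>a. a *s dPS z0 v)) (at z0)"
proof -
  define U where "U = ball z0 (norm z0 / 2)"
  have U: "open U" "convex U" "z0 \<in> U" using z0 by (auto simp: U_def)
  have Unz: "z \<noteq> 0" if "z \<in> U" for z
  proof
    assume "z = 0" then show False using that by (auto simp: U_def)
  qed
  define w where "w z \<theta> = (1 / E \<theta>) *s DZ z (p + E \<theta> *s v)" for z \<theta>
  define fx where "fx z \<theta> = Blinfun (\<lambda>a. a *s w z \<theta>)" for z \<theta>
  have fx_apply: "blinfun_apply (fx z \<theta>) = (\<lambda>a. a *s w z \<theta>)" for z \<theta>
    unfolding fx_def by (rule bounded_linear_Blinfun_apply[OF bl_smult_left])
  have der: "((\<lambda>z. (1 / E \<theta>) *s \<phi> z (p + E \<theta> *s v)) has_derivative blinfun_apply (fx z \<theta>)) (at z within U)"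
    if "z \<in> U" for z \<theta>
  proof -
    have "((\<lambda>z. (1 / E \<theta>) *s \<phi> z (p + E \<theta> *s v)) has_derivative (\<lambda>a. (1 / E \<theta>) *s (a *s DZ z (p + E \<theta> *s v)))) (at z)"
      by (rule bounded_linear.has_derivative[OF bounded_linear_smult_vec phi_z_deriv'[OF Unz[OF that]]])
    then show ?thesis unfolding fx_apply w_def by (simp add: smult_comm has_derivative_at_withinI)
  qed
  have contw: "continuous_on (U \<times> cbox 0 1) (\<lambda>q. w (fst q) (snd q))"
  proof -
    have "continuous_on (U \<times> cbox 0 1) (\<lambda>q. DZ (fst q) (p + E (snd q) *s v))"
    proof -
      have "continuous_on (U \<times> cbox 0 1) ((\<lambda>q. DZ (fst q) (snd q)) \<circ> (\<lambda>q. (fst q, p + E (snd q) *s v)))"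
        by (rule continuous_on_compose, intro continuous_intros continuous_on_vec_smult,
            rule continuous_on_subset[OF DZ_cont]) (auto dest: Unz)
      then show ?thesis by (simp add: o_def)
    qed
    then show ?thesis unfolding w_def by (intro continuous_on_vec_smult continuous_intros) auto
  qed
  have contfx: "continuous_on (U \<times> cbox 0 1) (\<lambda>(z, \<theta>). fx z \<theta>)"
  proof (rule continuous_on_blinfun_componentwise)
    fix i :: complex
    have "continuous_on (U \<times> cbox 0 1) (\<lambda>q. i *s w (fst q) (snd q))"
      by (intro continuous_on_vec_smult contw continuous_intros)
    then show "continuous_on (U \<times> cbox 0 1) (\<lambda>q. blinfun_apply (case q of (z, \<theta>) \<Rightarrow> fx z \<theta>) i)"
      by (simp add: case_prod_beta fx_apply)
  qed
  have intf: "(\<lambda>\<theta>. (1 / E \<theta>) *s \<phi> z (p + E \<theta> *s v)) integrable_on cbox 0 1" if "z \<in> U" for z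
    by (rule integrable_continuous, intro continuous_on_vec_smult phi_cont2 continuous_intros)
       (auto simp: Unz[OF that])
  have L: "((\<lambda>z. integral (cbox 0 1) (\<lambda>\<theta>. (1 / E \<theta>) *s \<phi> z (p + E \<theta> *s v))) has_derivative
          blinfun_apply (integral (cbox 0 1) (fx z0))) (at z0 within U)"
    by (rule leibniz_rule[OF der intf contfx U(3) U(2)])
  have intw: "(w z0) integrable_on cbox 0 1"
  proof -
    have "continuous_on (cbox 0 1) (\<lambda>\<theta>. w (fst (z0, \<theta>)) (snd (z0, \<theta>)))"
      by (rule continuous_on_compose2[OF contw]) (auto intro!: continuous_intros simp: U)
    then show ?thesis by (simp add: integrable_continuous_real)
  qed
  have intfx: "fx z0 integrable_on cbox 0 1"
  proof -
    have "continuous_on (cbox 0 1) (\<lambda>\<theta>. (\<lambda>(z, \<theta>). fx z \<theta>) (z0, \<theta>))"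
      by (rule continuous_on_compose2[OF contfx]) (auto intro!: continuous_intros simp: U)
    then show ?thesis by (simp add: integrable_continuous_real)
  qed
  have "blinfun_apply (integral (cbox 0 1) (fx z0)) = (\<lambda>a. a *s dPS z0 v)"
  proof
    fix a
    have "blinfun_apply (integral (cbox 0 1) (fx z0)) a = integral (cbox 0 1) (\<lambda>\<theta>. a *s w z0 \<theta>)"
      by (subst blinfun_apply_integral[OF intfx]) (simp add: fx_apply)
    also have "\<dots> = a *s integral (cbox 0 1) (w z0)" by (rule integral_smult_vec[OF intw])
    finally show "blinfun_apply (integral (cbox 0 1) (fx z0)) a = a *s dPS z0 v"
      by (simp add: dPS_def w_def[abs_def])
  qed
  with L have L2: "((\<lambda>z. integral (cbox 0 1) (\<lambda>\<theta>. (1 / E \<theta>) *s \<phi> z (p + E \<theta> *s v))) has_derivative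
          (\<lambda>a. a *s dPS z0 v)) (at z0)"
    using at_within_open[OF U(3) U(1)] by simp
  show ?thesis
  proof (rule has_derivative_transform_within_open[OF L2 U(1) U(3)])
    fix z assume "z \<in> U"
    then show "integral (cbox 0 1) (\<lambda>\<theta>. (1 / E \<theta>) *s \<phi> z (p + E \<theta> *s v)) = PS z v"
      using Unz by (simp add: PS_def DX_int)
  qed
qed

lemma PS_holo: "(\<lambda>z. PS z v $ i) holomorphic_on (- {0})"
  unfolding holomorphic_on_def
proof
  fix z :: complex assume "z \<in> - {0}"
  then have "((\<lambda>z. PS z v $ i) has_field_derivative dPS z v $ i) (at z)"
    by (intro has_derivative_vec_field PS_deriv) auto
  then show "(\<lambda>z. PS z v $ i) field_differentiable at z within - {0}"
    unfolding field_differentiable_def using has_field_derivative_at_within by blast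
qed

lemma PS_cont: "continuous_on (- {0}) PS"
proof -
  have "continuous_on (- {0}) ((\<lambda>q. DX (fst q) (snd q)) \<circ> (\<lambda>z. (z, p)))"
    by (rule continuous_on_compose, intro continuous_intros, rule continuous_on_subset[OF DX_cont]) auto
  then show ?thesis by (simp add: o_def PS_def[abs_def])
qed

end

lemma periodic_shift:
  fixes h :: "real \<Rightarrow> 'a::banach"
  assumes cont: "continuous_on UNIV h" and per: "\<And>t. h (t + 1) = h t" and a: "0 \<le> a" "a \<le> 1"
  shows "integral {0..1} (\<lambda>\<theta>. h (a + \<theta>)) = integral {0..1} h"
proof -
  have int: "h integrable_on {x..y}" for x y
    by (rule integrable_continuous_real, rule continuous_on_subset[OF cont]) auto
  have "(h has_integral integral {a..1+a} h) {0+a..1+a}" using integrable_integral[OF int[of a "1+a"]] by simp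
  then have "((h \<circ> (+) a) has_integral integral {a..1+a} h) {0..1}"
    using has_integral_shift_Icc_real by blast
  then have 1: "integral {0..1} (\<lambda>\<theta>. h (a + \<theta>)) = integral {a..1+a} h"
    by (simp add: integral_unique o_def)
  have 2: "integral {a..1+a} h = integral {a..1} h + integral {1..1+a} h"
    using Henstock_Kurzweil_Integration.integral_combine[where a=a and c=1 and b="1+a" and f=h] a int by simp
  have "(h has_integral integral {0..a} h) {0+1..a+1}"
  proof -
    have "(h has_integral integral {0..a} h) {0..a}" using integrable_integral[OF int[of 0 a]] .
    then have "((h \<circ> (+) (-1)) has_integral integral {0..a} h) {1..a+1}"
      using has_integral_shift_Icc_real[of h "-1" _ 1 "a+1"] by simp
    moreover have "h \<circ> (+) (-1) = h" using per[of "x - 1" for x] by (auto simp: fun_eq_iff o_def)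
    ultimately show ?thesis by simp
  qed
  then have 3: "integral {1..1+a} h = integral {0..a} h" by (simp add: integral_unique add.commute)
  have 4: "integral {0..a} h + integral {a..1} h = integral {0..1} h"
    using Henstock_Kurzweil_Integration.integral_combine[where a=0 and c=a and b=1 and f=h] a int by simp
  show ?thesis using 1 2 3 4 by (simp add: add.commute)
qed

context cact begin

definition Fm where "Fm x = integral {0..1} (\<lambda>\<theta>. PS (E (- \<theta>)) (\<phi> (E \<theta>) x - p))"
definition FD where "FD x = integral {0..1} (\<lambda>\<theta>. PS (E (- \<theta>)) o\<^sub>L DX (E \<theta>) x)"

lemma DX_cont2:
  assumes "continuous_on S f" "continuous_on S g" "\<And>s. s \<in> S \<Longrightarrow> f s \<noteq> 0"
  shows "continuous_on S (\<lambda>s. DX (f s) (g s))"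
proof -
  have "continuous_on S ((\<lambda>q. DX (fst q) (snd q)) \<circ> (\<lambda>s. (f s, g s)))"
    by (rule continuous_on_compose[OF continuous_on_Pair[OF assms(1,2)]],
        rule continuous_on_subset[OF DX_cont]) (use assms(3) in auto)
  then show ?thesis by (simp add: o_def)
qed

lemma PSE_cont: "continuous_on S (\<lambda>q. PS (E (f q)))" if "continuous_on S f"
  by (rule continuous_on_compose2[OF PS_cont]) (auto intro!: continuous_intros that)

lemma contFD: "continuous_on (UNIV \<times> cbox 0 1) (\<lambda>(x, \<theta>). PS (E (- \<theta>)) o\<^sub>L DX (E \<theta>) x)"
proof -
  have c1: "continuous_on (UNIV \<times> cbox 0 1) (\<lambda>q::(complex^'n) \<times> real. DX (E (snd q)) (fst q))"
    by (rule DX_cont2) (auto intro!: continuous_intros)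
  have c2: "continuous_on (UNIV \<times> cbox 0 1) (\<lambda>q::(complex^'n) \<times> real. PS (E (- snd q)))"
    by (intro PSE_cont continuous_intros)
  have "continuous_on (UNIV \<times> cbox 0 1) (\<lambda>q::(complex^'n) \<times> real. PS (E (- snd q)) o\<^sub>L DX (E (snd q)) (fst q))"
    by (rule bounded_bilinear.continuous_on[OF bounded_bilinear_blinfun_compose c2 c1])
  then show ?thesis by (simp add: case_prod_beta)
qed

lemma contFm_int: "continuous_on S (\<lambda>q. PS (E (- g q)) (\<phi> (E (g q)) (f q) - p))"
  if "continuous_on S f" "continuous_on S g"
proof -
  have c: "continuous_on S (\<lambda>q. \<phi> (E (g q)) (f q) - p)"
    by (intro continuous_intros phi_cont2 that cont_E') auto
  show ?thesis
  proof (rule bounded_bilinear.continuous_on[OF bounded_bilinear_blinfun_apply _ c])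
    show "continuous_on S (\<lambda>q. PS (E (- g q)))"
      by (rule PSE_cont[where f="\<lambda>q. - g q"]) (intro continuous_intros that)
  qed
qed

lemma F_deriv: "(Fm has_derivative blinfun_apply (FD x)) (at x)"
proof -
  have der: "((\<lambda>x. PS (E (- t)) (\<phi> (E t) x - p)) has_derivative blinfun_apply (PS (E (- t)) o\<^sub>L DX (E t) x)) (at x within UNIV)"
    for x t
  proof -
    have "((\<lambda>x. \<phi> (E t) x - p) has_derivative blinfun_apply (DX (E t) x)) (at x)"
      using has_derivative_diff[OF phi_x_deriv[of "E t" x] has_derivative_const[of p]] by simp
    from bounded_linear.has_derivative[OF blinfun.bounded_linear_right[of "PS (E (- t))"] this]
    have "((\<lambda>x. PS (E (- t)) (\<phi> (E t) x - p)) has_derivative (\<lambda>v. PS (E (- t)) (DX (E t) x v))) (at x)" .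
    moreover have "blinfun_apply (PS (E (- t)) o\<^sub>L DX (E t) x) = (\<lambda>v. PS (E (- t)) (DX (E t) x v))"
      by (rule ext) simp
    ultimately show ?thesis by simp
  qed
  have intf: "(\<lambda>\<theta>. PS (E (- \<theta>)) (\<phi> (E \<theta>) x - p)) integrable_on cbox 0 1" for x
    by (rule integrable_continuous, rule contFm_int) (auto intro!: continuous_intros)
  from leibniz_rule[OF der intf contFD, of x]
  show ?thesis by (simp add: Fm_def[abs_def] FD_def)
qed

lemma FD_cont: "continuous_on UNIV FD"
  using integral_continuous_on_param[OF contFD] by (simp add: FD_def[abs_def])

lemma FD_int: "(\<lambda>\<theta>. PS (E (- \<theta>)) o\<^sub>L DX (E \<theta>) x) integrable_on {0..1}"
proof -
  have "continuous_on {0..1} (\<lambda>\<theta>. (\<lambda>(x, \<theta>). PS (E (- \<theta>)) o\<^sub>L DX (E \<theta>) x) (x, \<theta>))"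
    by (rule continuous_on_compose2[OF contFD]) (auto intro!: continuous_intros)
  then show ?thesis by (simp add: integrable_continuous_real)
qed

lemma FD_apply: "FD x v = integral {0..1} (\<lambda>\<theta>. PS (E (- \<theta>)) (DX (E \<theta>) x v))"
  unfolding FD_def by (subst blinfun_apply_integral[OF FD_int]) simp

lemma FD_homog: "FD x (c *s v) = c *s FD x v"
proof -
  have int: "(\<lambda>\<theta>. PS (E (- \<theta>)) (DX (E \<theta>) x v)) integrable_on {0..1}"
    using integrable_linear[OF FD_int[of x] blinfun.bounded_linear_left[of v]] by (simp add: o_def)
  show ?thesis unfolding FD_apply
    by (simp add: DX_homog PS_homog integral_smult_vec[OF int])
qed

lemma Fm_p: "Fm p = 0"
  unfolding Fm_def by (simp add: fixp)

lemma FD_p: "FD p = id_blinfun"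
proof -
  have "PS (E (- \<theta>)) o\<^sub>L DX (E \<theta>) p = id_blinfun" for \<theta>
  proof -
    have "PS (E (- \<theta>)) o\<^sub>L DX (E \<theta>) p = PS (E (- \<theta>) * E \<theta>)" using PS_mult[of "E (- \<theta>)" "E \<theta>"] by (simp add: PS_def)
    also have "E (- \<theta>) * E \<theta> = 1" by (simp add: E_minus)
    finally show ?thesis by (simp add: PS_1)
  qed
  then show ?thesis by (simp add: FD_def)
qed

lemma Fm_rot: assumes a: "0 \<le> a" "a \<le> 1" shows "Fm (\<phi> (E a) x) = PS (E a) (Fm x)"
proof -
  define h where "h \<theta> = PS (E (- \<theta>)) (\<phi> (E \<theta>) x - p)" for \<theta>
  have conth: "continuous_on UNIV h" unfolding h_def[abs_def]
    by (rule contFm_int) (auto intro!: continuous_intros)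
  have per: "h (t + 1) = h t" for t
  proof -
    have "E (t + 1) = E t" by (simp add: E_add)
    moreover have "E (- (t + 1)) = E (- t)" using E_add[of "- (t + 1)" 1] by simp
    ultimately show ?thesis by (simp add: h_def)
  qed
  have eq: "PS (E (- \<theta>)) (\<phi> (E \<theta>) (\<phi> (E a) x) - p) = PS (E a) (h (a + \<theta>))" for \<theta>
  proof -
    have "\<phi> (E \<theta>) (\<phi> (E a) x) = \<phi> (E (a + \<theta>)) x"
      by (simp add: phi_mult[symmetric] E_add mult.commute)
    moreover have "PS (E (- \<theta>)) = PS (E a) o\<^sub>L PS (E (- (a + \<theta>)))"
    proof -
      have "E (- \<theta>) = E a * E (- (a + \<theta>))" by (simp add: E_add[symmetric])
      then show ?thesis by (simp add: PS_mult)
    qed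
    ultimately show ?thesis by (simp add: h_def)
  qed
  have inth: "(\<lambda>\<theta>. h (a + \<theta>)) integrable_on {0..1}"
    by (rule integrable_continuous_real, rule continuous_on_compose2[OF conth]) (auto intro!: continuous_intros)
  have "Fm (\<phi> (E a) x) = integral {0..1} (\<lambda>\<theta>. PS (E a) (h (a + \<theta>)))"
    unfolding Fm_def by (simp add: eq)
  also have "\<dots> = PS (E a) (integral {0..1} (\<lambda>\<theta>. h (a + \<theta>)))"
    using integral_linear[OF inth blinfun.bounded_linear_right[of "PS (E a)"]] by (simp add: o_def)
  also have "\<dots> = PS (E a) (Fm x)"
  proof -
    have "integral {0..1} (\<lambda>\<theta>. h (a + \<theta>)) = integral {0..1} h" by (rule periodic_shift[OF conth per a])
    also have "\<dots> = Fm x" by (simp add: Fm_def h_def[abs_def])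
    finally show ?thesis by simp
  qed
  finally show ?thesis .
qed

end

lemma sphere_E: assumes "norm w = 1" obtains a where "0 \<le> a" "a \<le> 1" "w = E a"
proof -
  define a where "a = Arg2pi w / (2 * pi)"
  have "0 \<le> Arg2pi w" "Arg2pi w < 2 * pi" "is_Arg w (Arg2pi w)" using Arg2pi[of w] by auto
  then have a: "0 \<le> a" "a \<le> 1" by (auto simp: a_def field_simps)
  have "w = exp (\<i> * of_real (Arg2pi w))" using \<open>is_Arg w (Arg2pi w)\<close> assms by (simp add: is_Arg_def)
  also have "\<dots> = E a" by (simp add: E_def a_def field_simps)
  finally show ?thesis using a that by blast
qed

lemma one_limpt_sphere: "(1::complex) islimpt sphere 0 1"
proof (rule connected_imp_perfect)
  show "connected (sphere (0::complex) 1)" by (rule connected_sphere) simp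
  show "(1::complex) \<in> sphere 0 1" by simp
  fix x :: complex
  show "sphere 0 1 \<noteq> {x}"
  proof
    assume "sphere 0 1 = {x}"
    moreover have "(1::complex) \<in> sphere 0 1" "(-1::complex) \<in> sphere 0 1" by auto
    ultimately show False by auto
  qed
qed

context cact begin

lemma Fm_phi_deriv: assumes "w \<noteq> 0"
  shows "((\<lambda>w. Fm (\<phi> w x)) has_derivative (\<lambda>a. a *s FD (\<phi> w x) (DZ w x))) (at w)"
proof -
  have "((Fm \<circ> (\<lambda>w. \<phi> w x)) has_derivative (blinfun_apply (FD (\<phi> w x)) \<circ> (\<lambda>a. a *s DZ w x))) (at w)"
    by (rule diff_chain_at[OF phi_z_deriv'[OF assms] F_deriv])
  then show ?thesis by (simp add: o_def FD_homog)
qed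

lemma Fm_equiv: assumes z: "z \<noteq> 0" shows "Fm (\<phi> z x) = PS z (Fm x)"
proof (subst vec_eq_iff, rule allI)
  fix i
  define k where "k w = Fm (\<phi> w x) $ i - PS w (Fm x) $ i" for w
  have hk: "k holomorphic_on (- {0})"
  proof -
    have "(\<lambda>w. Fm (\<phi> w x) $ i) holomorphic_on (- {0})"
      unfolding holomorphic_on_def
    proof
      fix w :: complex assume "w \<in> - {0}"
      then have "((\<lambda>w. Fm (\<phi> w x) $ i) has_field_derivative FD (\<phi> w x) (DZ w x) $ i) (at w)"
        by (intro has_derivative_vec_field Fm_phi_deriv) auto
      then show "(\<lambda>w. Fm (\<phi> w x) $ i) field_differentiable at w within - {0}"
        unfolding field_differentiable_def using has_field_derivative_at_within by blast
    qed
    then show ?thesis unfolding k_def[abs_def] by (intro holomorphic_on_diff PS_holo)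
  qed
  have "k z = 0"
  proof (rule analytic_continuation[OF hk])
    show "open (- {0::complex})" by auto
    show "connected (- {0::complex})" by (rule connected_punctured_universe) simp
    show "sphere 0 1 \<subseteq> - {0::complex}" by auto
    show "(1::complex) \<in> - {0}" by simp
    show "1 islimpt sphere (0::complex) 1" by (rule one_limpt_sphere)
    show "z \<in> - {0}" using z by simp
    fix w :: complex assume "w \<in> sphere 0 1"
    then obtain a where "0 \<le> a" "a \<le> 1" "w = E a" using sphere_E by auto
    then show "k w = 0" by (simp add: k_def Fm_rot)
  qed
  then show "Fm (\<phi> z x) $ i = PS z (Fm x) $ i" by (simp add: k_def)
qed

lemma Fm_holo: "holo_vec UNIV Fm"
  unfolding holo_vec_def using F_deriv FD_homog by blast

end

lemma open_sup_lt:
  fixes f :: "'a::metric_space \<times> 'b::metric_space \<Rightarrow> real"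
  assumes K: "compact K" and cont: "continuous_on (UNIV \<times> K) f"
  shows "open {v. \<forall>z\<in>K. f (v, z) < r}"
proof (subst open_subopen, intro ballI)
  fix v0 assume v0: "v0 \<in> {v. \<forall>z\<in>K. f (v, z) < r}"
  show "\<exists>T. open T \<and> v0 \<in> T \<and> T \<subseteq> {v. \<forall>z\<in>K. f (v, z) < r}"
  proof (cases "K = {}")
    case True then show ?thesis by auto
  next
    case False
    have c1: "continuous_on K (\<lambda>z. f (v0, z))"
      by (rule continuous_on_compose2[OF cont]) (auto intro!: continuous_intros)
    obtain zs where zs: "zs \<in> K" "\<And>z. z \<in> K \<Longrightarrow> f (v0, z) \<le> f (v0, zs)"
      using continuous_attains_sup[OF K False c1] by blast
    define m where "m = f (v0, zs)"
    have "m < r" using v0 zs by (auto simp: m_def)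
    define e where "e = (r - m) / 2"
    have e: "e > 0" using \<open>m < r\<close> by (simp add: e_def)
    obtain X0 where X0: "v0 \<in> X0" "open X0"
      "\<forall>x\<in>X0 \<inter> UNIV. \<forall>t\<in>K. dist (f (x, t)) (f (v0, t)) \<le> e"
      using continuous_on_prod_compactE[OF cont K _ e, of v0] by auto
    have "X0 \<subseteq> {v. \<forall>z\<in>K. f (v, z) < r}"
    proof (intro subsetI CollectI ballI)
      fix v z assume "v \<in> X0" "z \<in> K"
      then have "dist (f (v, z)) (f (v0, z)) \<le> e" using X0 by auto
      moreover have "f (v0, z) \<le> m" using zs \<open>z \<in> K\<close> by (simp add: m_def)
      ultimately have "f (v, z) \<le> m + e" by (simp add: dist_real_def abs_le_iff)
      moreover have "m + e < r" using \<open>m < r\<close> unfolding e_def by (simp add: field_simps)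
      ultimately show "f (v, z) < r" by linarith
    qed
    then show ?thesis using X0 by blast
  qed
qed

lemma frontier_annulus:
  fixes a b :: real
  assumes "z \<in> frontier (cball (0::complex) b - ball 0 a)"
  shows "norm z = a \<or> norm z = b"
proof -
  let ?A = "cball (0::complex) b - ball 0 a"
  have cl: "closed ?A" by (intro closed_Diff) auto
  have "z \<in> ?A" using assms cl frontier_subset_closed by blast
  then have z1: "a \<le> norm z" "norm z \<le> b" by auto
  have "{w. a < norm w \<and> norm w < b} \<subseteq> interior ?A"
  proof (rule interior_maximal)
    show "{w::complex. a < norm w \<and> norm w < b} \<subseteq> ?A" by auto
    have "open ({w::complex. a < norm w} \<inter> {w. norm w < b})"
      by (intro open_Int open_Collect_less continuous_intros)
    then show "open {w::complex. a < norm w \<and> norm w < b}" by (simp add: Collect_conj_eq)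
  qed
  moreover have "z \<notin> interior ?A" using assms by (simp add: frontier_def)
  ultimately show ?thesis using z1 by force
qed

lemma interval_R:
  fixes H :: "complex \<Rightarrow> complex^'n"
  assumes hol: "\<And>i. (\<lambda>w. H w $ i) holomorphic_on (- {0})"
  shows "is_interval {\<rho>. 0 < \<rho> \<and> (\<forall>w\<in>sphere 0 \<rho>. \<forall>i. norm (H w $ i) < r)}"
  unfolding is_interval_1
proof (intro ballI allI impI)
  fix \<rho>1 \<rho>3 x
  assume r1: "\<rho>1 \<in> {\<rho>. 0 < \<rho> \<and> (\<forall>w\<in>sphere 0 \<rho>. \<forall>i. norm (H w $ i) < r)}"
    and r3: "\<rho>3 \<in> {\<rho>. 0 < \<rho> \<and> (\<forall>w\<in>sphere 0 \<rho>. \<forall>i. norm (H w $ i) < r)}"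
    and x: "\<rho>1 \<le> x \<and> x \<le> \<rho>3"
  have p1: "0 < \<rho>1" using r1 by auto
  show "x \<in> {\<rho>. 0 < \<rho> \<and> (\<forall>w\<in>sphere 0 \<rho>. \<forall>i. norm (H w $ i) < r)}"
  proof (safe)
    show "0 < x" using p1 x by linarith
    fix w :: complex and i assume w: "w \<in> sphere 0 x"
    let ?A = "cball (0::complex) \<rho>3 - ball 0 \<rho>1"
    let ?K = "sphere (0::complex) \<rho>1 \<union> sphere 0 \<rho>3"
    have AS: "?A \<subseteq> - {0}" using p1 by auto
    have holA: "(\<lambda>w. H w $ i) holomorphic_on ?A" using holomorphic_on_subset[OF hol AS] .
    have contK: "continuous_on ?K (\<lambda>w. norm (H w $ i))"
      by (intro continuous_intros continuous_on_subset[OF holomorphic_on_imp_continuous_on[OF hol]]) (use p1 x in auto)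
    have "complex_of_real \<rho>1 \<in> ?K" using p1 by simp
    then have Kne: "?K \<noteq> {}" by blast
    have Kc: "compact ?K" by auto
    obtain ws where ws: "ws \<in> ?K" "\<And>w. w \<in> ?K \<Longrightarrow> norm (H w $ i) \<le> norm (H ws $ i)"
      using continuous_attains_sup[OF Kc Kne contK] by blast
    have Q1: "\<forall>w\<in>sphere 0 \<rho>1. \<forall>i. norm (H w $ i) < r" using r1 by blast
    have Q3: "\<forall>w\<in>sphere 0 \<rho>3. \<forall>i. norm (H w $ i) < r" using r3 by blast
    have Blt: "norm (H ws $ i) < r"
    proof (cases "ws \<in> sphere 0 \<rho>1")
      case True from bspec[OF Q1 True] show ?thesis by blast
    next
      case False
      then have "ws \<in> sphere 0 \<rho>3" using ws(1) by (rule_tac UnE) auto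
      from bspec[OF Q3 this] show ?thesis by blast
    qed
    have "cmod (H w $ i) \<le> norm (H ws $ i)"
    proof (rule maximum_modulus_frontier[where f="\<lambda>w. H w $ i" and S="?A" and B="norm (H ws $ i)"])
      show "(\<lambda>w. H w $ i) holomorphic_on interior ?A"
        by (rule holomorphic_on_subset[OF holA interior_subset])
      have "closed ?A" by (intro closed_Diff) auto
      then show "continuous_on (closure ?A) (\<lambda>w. H w $ i)"
        using holomorphic_on_imp_continuous_on[OF holA] by simp
      show "bounded ?A" by (rule bounded_subset[of "cball 0 \<rho>3"]) auto
      fix z assume "z \<in> frontier ?A"
      then have "z \<in> ?K" using frontier_annulus by auto
      then show "cmod (H z $ i) \<le> norm (H ws $ i)" using ws(2) by simp
    next
      show "w \<in> ?A" using w x by auto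
    qed
    then show "norm (H w $ i) < r" using Blt by linarith
  qed
qed


locale cset = cact \<phi> p for \<phi> :: "complex \<Rightarrow> complex^'n \<Rightarrow> complex^'n" and p +
  fixes U' V' :: "(complex^'n) set" and g :: "complex^'n \<Rightarrow> complex^'n"
    and g' :: "complex^'n \<Rightarrow> complex^'n \<Rightarrow> complex^'n" and r :: real
  assumes oU': "open U'" and pU': "p \<in> U'" and oV': "open V'"
    and hom: "homeomorphism U' V' Fm g"
    and gder: "\<And>y. y \<in> V' \<Longrightarrow> (g has_derivative g' y) (at y)"
    and g'eq: "\<And>y. y \<in> V' \<Longrightarrow> g' y = inv (blinfun_apply (FD (g y)))"
    and bijFD: "\<And>y. y \<in> V' \<Longrightarrow> bij (blinfun_apply (FD (g y)))"
    and rpos: "r > 0"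
    and rV': "\<And>v::complex^'n. (\<forall>i. norm (v $ i) < r) \<Longrightarrow> v \<in> V'"
begin

lemma hom_facts:
  "\<And>x. x \<in> U' \<Longrightarrow> g (Fm x) = x" "\<And>y. y \<in> V' \<Longrightarrow> Fm (g y) = y"
  "\<And>x. x \<in> U' \<Longrightarrow> Fm x \<in> V'" "\<And>y. y \<in> V' \<Longrightarrow> g y \<in> U'"
  "continuous_on V' g"
  using hom unfolding homeomorphism_def by auto

definition V where "V = {v. \<forall>z\<in>sphere 0 1. \<forall>i. norm (PS z v $ i) < r}"
definition U where "U = U' \<inter> Fm -` V"
definition W where "W = {x. \<exists>c u. c \<noteq> 0 \<and> u \<in> U \<and> x = \<phi> c u}"

lemma PS_joint_cont: "continuous_on (UNIV \<times> (- {0})) (\<lambda>q. PS (snd q) (fst q))"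
proof -
  have "continuous_on (UNIV \<times> (- {0})) (\<lambda>q::(complex^'n) \<times> complex. PS (snd q))"
    by (rule continuous_on_compose2[OF PS_cont]) (auto intro!: continuous_intros)
  then show ?thesis
    by (intro bounded_bilinear.continuous_on[OF bounded_bilinear_blinfun_apply] continuous_intros)
qed

lemma V_open: "open V"
proof -
  have "V = (\<Inter>i\<in>UNIV. {v. \<forall>z\<in>sphere 0 1. norm (PS z v $ i) < r})" by (auto simp: V_def)
  also have "open \<dots>"
  proof (rule open_INT, simp, rule ballI)
    fix i
    have "continuous_on (UNIV \<times> sphere 0 1) (\<lambda>q. norm (PS (snd q) (fst q) $ i))"
      by (intro continuous_intros continuous_on_subset[OF PS_joint_cont]) auto
    from open_sup_lt[OF compact_sphere this]
    show "open {v. \<forall>z\<in>sphere 0 1. norm (PS z v $ i) < r}" by simp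
  qed
  finally show ?thesis .
qed

lemma V_sub: "v \<in> V \<Longrightarrow> v \<in> V'"
proof -
  assume "v \<in> V"
  then have "\<forall>i. norm (PS 1 v $ i) < r" unfolding V_def by auto
  then show "v \<in> V'" using rV' by (simp add: PS_1)
qed

lemma zero_V: "0 \<in> V" using rpos by (simp add: V_def)

lemma PS_V_iff: assumes c: "c \<noteq> 0"
  shows "PS c v \<in> V \<longleftrightarrow> (\<forall>w\<in>sphere 0 (norm c). \<forall>i. norm (PS w v $ i) < r)"
proof
  assume H: "PS c v \<in> V"
  show "\<forall>w\<in>sphere 0 (norm c). \<forall>i. norm (PS w v $ i) < r"
  proof (intro ballI allI)
    fix w :: complex and i assume w: "w \<in> sphere 0 (norm c)"
    define z where "z = w / c"
    have z: "z \<in> sphere 0 1" using w c by (simp add: z_def norm_divide)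
    have wz: "w = z * c" using c by (simp add: z_def)
    have "z \<noteq> 0" using z by auto
    then have "PS w v = PS z (PS c v)" using c by (simp add: wz PS_mult_apply)
    then show "norm (PS w v $ i) < r" using H z unfolding V_def by auto
  qed
next
  assume H: "\<forall>w\<in>sphere 0 (norm c). \<forall>i. norm (PS w v $ i) < r"
  show "PS c v \<in> V" unfolding V_def
  proof (intro CollectI ballI allI)
    fix z :: complex and i assume z: "z \<in> sphere 0 1"
    then have "z \<noteq> 0" by auto
    then have "PS z (PS c v) = PS (z * c) v" using c by (simp add: PS_mult_apply)
    moreover have "z * c \<in> sphere 0 (norm c)" using z by (simp add: norm_mult)
    ultimately show "norm (PS z (PS c v) $ i) < r" using H by auto
  qed
qed

lemma T_conn: "connected {c. c \<noteq> 0 \<and> PS c v \<in> V}"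
proof -
  define R where "R = {\<rho>. 0 < \<rho> \<and> (\<forall>w\<in>sphere 0 \<rho>. \<forall>i. norm (PS w v $ i) < r)}"
  have iR: "is_interval R" unfolding R_def by (rule interval_R) (rule PS_holo)
  have eq: "{c. c \<noteq> 0 \<and> PS c v \<in> V} = (\<lambda>q. complex_of_real (fst q) * E (snd q)) ` (R \<times> UNIV)"
  proof (intro set_eqI iffI)
    fix c assume "c \<in> {c. c \<noteq> 0 \<and> PS c v \<in> V}"
    then have c: "c \<noteq> 0" "PS c v \<in> V" by auto
    have "norm (c / complex_of_real (norm c)) = 1" using c by (simp add: norm_divide)
    then obtain a where a: "c / complex_of_real (norm c) = E a" using sphere_E by blast
    have "c = complex_of_real (norm c) * E a" using c a by (simp add: field_simps)
    moreover have "norm c \<in> R" using c PS_V_iff[OF c(1)] by (simp add: R_def)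
    ultimately show "c \<in> (\<lambda>q. complex_of_real (fst q) * E (snd q)) ` (R \<times> UNIV)"
      by (intro image_eqI[where x="(norm c, a)"]) auto
  next
    fix c assume "c \<in> (\<lambda>q. complex_of_real (fst q) * E (snd q)) ` (R \<times> UNIV)"
    then obtain \<rho> a where c: "c = complex_of_real \<rho> * E a" "\<rho> \<in> R" by auto
    then have \<rho>: "0 < \<rho>" by (simp add: R_def)
    have nc: "norm c = \<rho>" using c \<rho> by (simp add: norm_mult)
    have "c \<noteq> 0" using c \<rho> by simp
    moreover have "PS c v \<in> V" using PS_V_iff[OF \<open>c \<noteq> 0\<close>] c(2) nc by (simp add: R_def)
    ultimately show "c \<in> {c. c \<noteq> 0 \<and> PS c v \<in> V}" by simp
  qed
  have "connected ((\<lambda>q. complex_of_real (fst q) * E (snd q)) ` (R \<times> (UNIV :: real set)))"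
    by (intro connected_continuous_image connected_Times is_interval_connected iR connected_UNIV continuous_intros)
  then show ?thesis using eq by simp
qed

end

context cset begin

lemma Fm_cont: "continuous_on UNIV Fm"
  by (rule continuous_at_imp_continuous_on) (auto intro: has_derivative_continuous[OF F_deriv])

lemma phi_c_cont: assumes "c \<noteq> 0" shows "continuous_on UNIV (\<phi> c)"
  by (rule continuous_at_imp_continuous_on) (auto intro: has_derivative_continuous[OF phi_x_deriv[OF assms]])

lemma U_open: "open U"
  unfolding U_def by (intro open_Int oU' open_vimage V_open Fm_cont)

lemma p_U: "p \<in> U" using pU' zero_V by (simp add: U_def Fm_p)

lemma U_D: "u \<in> U \<Longrightarrow> u \<in> U' \<and> Fm u \<in> V" by (simp add: U_def)

lemma gV: assumes "v \<in> V" shows "g v \<in> U" "Fm (g v) = v"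
proof -
  have "v \<in> V'" using V_sub assms by blast
  then show "Fm (g v) = v" using hom_facts by blast
  then show "g v \<in> U" using \<open>v \<in> V'\<close> hom_facts assms by (simp add: U_def)
qed

lemma PS_c_cont: "continuous_on S (\<lambda>c. PS c v)" if "S \<subseteq> - {0}"
proof -
  have "continuous_on S PS" using continuous_on_subset[OF PS_cont that] .
  then show ?thesis
    by (intro bounded_bilinear.continuous_on[OF bounded_bilinear_blinfun_apply] continuous_intros)
qed

lemma KEY: assumes y: "y \<in> U" and u: "u \<in> U" and c: "c \<noteq> 0" and eq: "Fm u = PS c (Fm y)"
  shows "u = \<phi> c y"
proof -
  define v where "v = Fm y"
  define T where "T = {c. c \<noteq> 0 \<and> PS c v \<in> V}"
  define S where "S = {c \<in> T. \<phi> c y - g (PS c v) = 0}"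
  have TS: "T \<subseteq> - {0}" by (auto simp: T_def)
  have vV: "v \<in> V" using U_D[OF y] by (simp add: v_def)
  have yU': "y \<in> U'" using U_D[OF y] by simp
  have cont1: "continuous_on T (\<lambda>c. \<phi> c y)"
    by (rule phi_cont2) (auto intro!: continuous_intros simp: T_def)
  have cont2: "continuous_on T (\<lambda>c. g (PS c v))"
  proof (rule continuous_on_compose2[OF hom_facts(5) PS_c_cont[OF TS]])
    show "(\<lambda>c. PS c v) ` T \<subseteq> V'" using V_sub by (auto simp: T_def)
  qed
  have closed: "closedin (top_of_set T) S"
    unfolding S_def by (rule continuous_closedin_preimage_constant) (intro continuous_intros cont1 cont2)
  have Seq: "S = T \<inter> ((- {0}) \<inter> (\<lambda>c. \<phi> c y) -` U')"
  proof (intro set_eqI iffI)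
    fix c assume "c \<in> S"
    then have c: "c \<in> T" "\<phi> c y = g (PS c v)" by (auto simp: S_def)
    then have "PS c v \<in> V'" using V_sub by (auto simp: T_def)
    then have "\<phi> c y \<in> U'" using c hom_facts by auto
    then show "c \<in> T \<inter> ((- {0}) \<inter> (\<lambda>c. \<phi> c y) -` U')" using c TS by auto
  next
    fix c assume "c \<in> T \<inter> ((- {0}) \<inter> (\<lambda>c. \<phi> c y) -` U')"
    then have c: "c \<in> T" "c \<noteq> 0" "\<phi> c y \<in> U'" by auto
    have "Fm (\<phi> c y) = PS c v" using Fm_equiv[OF c(2)] by (simp add: v_def)
    then have "g (PS c v) = \<phi> c y" using hom_facts(1)[OF c(3)] by simp
    then show "c \<in> S" using c by (simp add: S_def)
  qed
  have "open ((- {0}) \<inter> (\<lambda>c. \<phi> c y) -` U')"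
  proof -
    have "continuous_on (- {0}) (\<lambda>c. \<phi> c y)" by (rule phi_cont2) (auto intro!: continuous_intros)
    then have "open ((\<lambda>c. \<phi> c y) -` U' \<inter> (- {0}))"
      using continuous_on_open_vimage[of "- {0}" "\<lambda>c. \<phi> c y"] oU' by auto
    then show ?thesis by (simp add: Int_commute)
  qed
  then have openS: "openin (top_of_set T) S" unfolding Seq by (rule openin_open_Int)
  have "1 \<in> T" using vV by (simp add: T_def PS_1)
  moreover have "g (PS 1 v) = \<phi> 1 y" using hom_facts(1)[OF yU'] by (simp add: PS_1 phi_1 v_def)
  ultimately have "1 \<in> S" by (simp add: S_def)
  then have "S = T" using T_conn[of v] closed openS unfolding connected_clopen T_def by blast
  moreover have "c \<in> T" using c eq U_D[OF u] by (simp add: T_def v_def)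
  ultimately have "\<phi> c y = g (PS c v)" by (auto simp: S_def)
  also have "\<dots> = g (Fm u)" using eq by (simp add: v_def)
  also have "\<dots> = u" using hom_facts(1) U_D[OF u] by simp
  finally show ?thesis by simp
qed

lemma g'_homog: assumes "y \<in> V'" shows "g' y (a *s v) = a *s g' y v"
proof -
  define M where "M = blinfun_apply (FD (g y))"
  have b: "bij M" using bijFD[OF assms] by (simp add: M_def)
  have g': "g' y = inv M" using g'eq[OF assms] by (simp add: M_def)
  have "M (a *s inv M v) = a *s M (inv M v)" by (simp add: M_def FD_homog)
  also have "\<dots> = a *s v" using surj_f_inv_f[OF bij_is_surj[OF b]] by simp
  finally have "inv M (a *s v) = inv M (M (a *s inv M v))" by simp
  also have "\<dots> = a *s inv M v" using b by (simp add: bij_is_inj inv_f_f)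
  finally show ?thesis using g' by simp
qed

lemma W_char: "x \<in> W \<longleftrightarrow> (\<exists>c. c \<noteq> 0 \<and> \<phi> (inverse c) x \<in> U)"
proof
  assume "x \<in> W"
  then obtain c u where "c \<noteq> 0" "u \<in> U" "x = \<phi> c u" by (auto simp: W_def)
  then show "\<exists>c. c \<noteq> 0 \<and> \<phi> (inverse c) x \<in> U" using phi_inv by auto
next
  assume "\<exists>c. c \<noteq> 0 \<and> \<phi> (inverse c) x \<in> U"
  then obtain c where "c \<noteq> 0" "\<phi> (inverse c) x \<in> U" by auto
  then show "x \<in> W" unfolding W_def using phi_inv'[of c x, symmetric] by blast
qed

lemma FW_char: "y \<in> Fm ` W \<longleftrightarrow> (\<exists>c. c \<noteq> 0 \<and> PS (inverse c) y \<in> V)"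
proof
  assume "y \<in> Fm ` W"
  then obtain c u where cu: "c \<noteq> 0" "u \<in> U" "y = Fm (\<phi> c u)" by (auto simp: W_def)
  then have "PS (inverse c) y = Fm u" by (simp add: Fm_equiv PS_inv)
  then show "\<exists>c. c \<noteq> 0 \<and> PS (inverse c) y \<in> V" using cu U_D by auto
next
  assume "\<exists>c. c \<noteq> 0 \<and> PS (inverse c) y \<in> V"
  then obtain c where c: "c \<noteq> 0" "PS (inverse c) y \<in> V" by auto
  define x where "x = \<phi> c (g (PS (inverse c) y))"
  have "x \<in> W" unfolding W_def x_def using c gV by blast
  moreover have "Fm x = y" unfolding x_def using c gV by (simp add: Fm_equiv PS_inv')
  ultimately show "y \<in> Fm ` W" by blast
qed

lemma W_inj: "inj_on Fm W"
proof (rule inj_onI)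
  fix x1 x2 assume "x1 \<in> W" "x2 \<in> W" and eq: "Fm x1 = Fm x2"
  then obtain a u b y where au: "a \<noteq> 0" "u \<in> U" "x1 = \<phi> a u" and bb: "b \<noteq> 0" "y \<in> U" "x2 = \<phi> b y"
    by (auto simp: W_def)
  have "PS a (Fm u) = PS b (Fm y)" using eq au bb by (simp add: Fm_equiv)
  then have "Fm u = PS (inverse a) (PS b (Fm y))" using au(1) by (metis PS_inv)
  also have "\<dots> = PS (inverse a * b) (Fm y)" using au(1) bb(1) by (simp add: PS_mult_apply)
  finally have "u = \<phi> (inverse a * b) y" using au bb by (intro KEY) auto
  then have "x1 = \<phi> (a * (inverse a * b)) y" using au bb by (simp add: phi_mult)
  also have "a * (inverse a * b) = b" using au(1) by simp
  finally show "x1 = x2" using bb by simp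
qed

end

context cset begin

lemma W_open: "open W"
proof -
  have "W = (\<Union>c\<in>- {0}. \<phi> (inverse c) -` U)" using W_char by auto
  also have "open \<dots>"
    by (intro open_UN ballI open_vimage U_open phi_c_cont) auto
  finally show ?thesis .
qed

lemma p_W: "p \<in> W"
  unfolding W_def using p_U phi_1[of p] by (intro CollectI exI[of _ 1] exI[of _ p]) auto

lemma W_inv: "z \<noteq> 0 \<Longrightarrow> x \<in> W \<Longrightarrow> \<phi> z x \<in> W"
proof -
  assume z: "z \<noteq> 0" and "x \<in> W"
  then obtain c u where cu: "c \<noteq> 0" "u \<in> U" "x = \<phi> c u" by (auto simp: W_def)
  then have "\<phi> z x = \<phi> (z * c) u" using z by (simp add: phi_mult)
  moreover have "z * c \<noteq> 0" using z cu by simp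
  ultimately show "\<phi> z x \<in> W" using cu unfolding W_def by blast
qed

lemma FW_open: "open (Fm ` W)"
proof -
  have "Fm ` W = (\<Union>c\<in>- {0}. blinfun_apply (PS (inverse c)) -` V)"
  proof (intro set_eqI)
    fix y show "y \<in> Fm ` W \<longleftrightarrow> y \<in> (\<Union>c\<in>- {0}. blinfun_apply (PS (inverse c)) -` V)"
      unfolding FW_char by auto
  qed
  also have "open \<dots>"
    by (intro open_UN ballI open_vimage V_open continuous_intros)
  finally show ?thesis .
qed

definition G where "G y = (SOME x. x \<in> W \<and> Fm x = y)"

lemma G_eq: assumes "x \<in> W" shows "G (Fm x) = x"
proof -
  have "G (Fm x) \<in> W \<and> Fm (G (Fm x)) = Fm x"
    unfolding G_def by (rule someI[of _ x]) (use assms in auto)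
  then show ?thesis using W_inj assms by (meson inj_onD)
qed

lemma G_holo: "holo_vec (Fm ` W) G"
  unfolding holo_vec_def
proof
  fix y0 assume "y0 \<in> Fm ` W"
  then obtain c where c: "c \<noteq> 0" "PS (inverse c) y0 \<in> V" using FW_char by auto
  define Oy where "Oy = blinfun_apply (PS (inverse c)) -` V"
  have Oy: "open Oy" "y0 \<in> Oy" using c V_open unfolding Oy_def by (auto intro!: open_vimage continuous_intros)
  define H where "H y = \<phi> c (g (PS (inverse c) y))" for y
  have HG: "H y = G y" if "y \<in> Oy" for y
  proof -
    have yV: "PS (inverse c) y \<in> V" using that by (simp add: Oy_def)
    have "H y \<in> W" unfolding H_def W_def using c gV[OF yV] by blast
    moreover have "Fm (H y) = y" unfolding H_def using c gV[OF yV] by (simp add: Fm_equiv PS_inv')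
    ultimately show ?thesis using G_eq by metis
  qed
  define w0 where "w0 = PS (inverse c) y0"
  have w0: "w0 \<in> V'" using c V_sub by (simp add: w0_def)
  have d1: "(blinfun_apply (PS (inverse c)) has_derivative blinfun_apply (PS (inverse c))) (at y0)"
    by (rule bounded_linear_imp_has_derivative[OF blinfun.bounded_linear_right])
  have d12: "(g \<circ> blinfun_apply (PS (inverse c)) has_derivative (g' w0 \<circ> blinfun_apply (PS (inverse c)))) (at y0)"
    by (rule diff_chain_at[OF d1]) (use gder[OF w0] in \<open>simp add: w0_def\<close>)
  have d123: "(\<phi> c \<circ> (g \<circ> blinfun_apply (PS (inverse c))) has_derivative
      (blinfun_apply (DX c (g w0)) \<circ> (g' w0 \<circ> blinfun_apply (PS (inverse c))))) (at y0)"
    by (rule diff_chain_at[OF d12]) (use phi_x_deriv[OF c(1)] in \<open>simp add: w0_def\<close>)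
  then have dH: "(H has_derivative (\<lambda>v. DX c (g w0) (g' w0 (PS (inverse c) v)))) (at y0)"
    by (simp add: H_def[abs_def] o_def)
  have dG: "(G has_derivative (\<lambda>v. DX c (g w0) (g' w0 (PS (inverse c) v)))) (at y0)"
    by (rule has_derivative_transform_within_open[OF dH Oy]) (simp add: HG)
  have "inverse c \<noteq> 0" using c by simp
  then have hom: "DX c (g w0) (g' w0 (PS (inverse c) (a *s v))) = a *s DX c (g w0) (g' w0 (PS (inverse c) v))"
    for a v by (simp add: PS_homog g'_homog[OF w0] DX_homog[OF c(1)])
  show "\<exists>L. (G has_derivative L) (at y0) \<and> (\<forall>(a::complex) v. L (a *s v) = a *s L v)"
    using dG hom by blast
qed

lemma final: "\<exists>W. open W \<and> p \<in> W \<and> (\<forall>z x. z \<noteq> 0 \<longrightarrow> x \<in> W \<longrightarrow> \<phi> z x \<in> W) \<and>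
                inj_on Fm W \<and> open (Fm ` W) \<and>
                (\<exists>G. holo_vec (Fm ` W) G \<and> (\<forall>x\<in>W. G (Fm x) = x))"
  using W_open p_W W_inv W_inj FW_open G_holo G_eq by blast

end

lemma norm_vec_le_sum: "norm (x::complex^'n) \<le> (\<Sum>i\<in>UNIV. norm (x $ i))"
  unfolding norm_vec_def by (rule L2_set_le_sum) simp

context cact begin

lemma main: "\<exists>W. open W \<and> p \<in> W \<and> (\<forall>z x. z \<noteq> 0 \<longrightarrow> x \<in> W \<longrightarrow> \<phi> z x \<in> W) \<and>
                inj_on Fm W \<and> open (Fm ` W) \<and>
                (\<exists>G. holo_vec (Fm ` W) G \<and> (\<forall>x\<in>W. G (Fm x) = x))"
proof -
  have idc: "id_blinfun o\<^sub>L FD p = id_blinfun" by (rule blinfun_eqI) (simp add: FD_p)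
  obtain U' V' g g' where IFT: "open U'" "U' \<subseteq> UNIV" "p \<in> U'" "open V'" "Fm p \<in> V'"
    "homeomorphism U' V' Fm g"
    "\<And>y. y \<in> V' \<Longrightarrow> (g has_derivative (g' y)) (at y)"
    "\<And>y. y \<in> V' \<Longrightarrow> g' y = inv (blinfun_apply (FD (g y)))"
    "\<And>y. y \<in> V' \<Longrightarrow> bij (blinfun_apply (FD (g y)))"
    by (rule inverse_function_theorem[where f=Fm, OF open_UNIV _ FD_cont _ idc]) (auto simp: F_deriv)
  have "0 \<in> V'" using IFT(5) by (simp add: Fm_p)
  then obtain r0 where r0: "r0 > 0" "ball 0 r0 \<subseteq> V'" using IFT(4) open_contains_ball by blast
  define r where "r = r0 / real CARD('n)"
  have r: "r > 0" using r0 by (simp add: r_def)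
  have rV': "v \<in> V'" if v: "\<forall>i. norm (v $ i) < r" for v :: "complex^'n"
  proof -
    have "norm v \<le> (\<Sum>i\<in>UNIV. norm (v $ i))" by (rule norm_vec_le_sum)
    also have "\<dots> < (\<Sum>i\<in>(UNIV::'n set). r)" by (rule sum_strict_mono) (use v in auto)
    also have "\<dots> = r0" by (simp add: r_def)
    finally show ?thesis using r0 by auto
  qed
  interpret cset \<phi> p U' V' g g' r
    by unfold_locales (use IFT r rV' in auto)
  show ?thesis by (rule final)
qed

end

theorem theoremA:
  fixes \<phi> \<psi> :: "complex \<Rightarrow> complex^'n \<Rightarrow> complex^'n" and p :: "complex^'n"
  assumes "holo_Cstar_action \<phi>"
    and "\<forall>z. z \<noteq> 0 \<longrightarrow> \<phi> z p = p"
    and "\<forall>z. z \<noteq> 0 \<longrightarrow> (\<phi> z has_derivative \<psi> z) (at p)"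
  shows "\<exists>F :: complex^'n \<Rightarrow> complex^'n.
           holo_vec UNIV F \<and> F p = 0 \<and>
           (\<forall>z. z \<noteq> 0 \<longrightarrow> \<psi> z \<circ> F = F \<circ> \<phi> z) \<and>
           (\<exists>W. open W \<and> p \<in> W \<and> (\<forall>z x. z \<noteq> 0 \<longrightarrow> x \<in> W \<longrightarrow> \<phi> z x \<in> W) \<and>
                inj_on F W \<and> open (F ` W) \<and>
                (\<exists>G. holo_vec (F ` W) G \<and> (\<forall>x\<in>W. G (F x) = x)))"
proof -
  interpret cact \<phi> p
    by unfold_locales (use assms in auto)
  have psi: "\<psi> z = blinfun_apply (PS z)" if "z \<noteq> 0" for z
  proof -
    have "(\<phi> z has_derivative \<psi> z) (at p)" using assms(3) that by auto
    moreover have "(\<phi> z has_derivative blinfun_apply (PS z)) (at p)"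
      unfolding PS_def by (rule phi_x_deriv[OF that])
    ultimately show ?thesis by (rule has_derivative_unique)
  qed
  have eqv: "\<forall>z. z \<noteq> 0 \<longrightarrow> \<psi> z \<circ> Fm = Fm \<circ> \<phi> z"
    by (auto simp: fun_eq_iff psi Fm_equiv)
  show ?thesis
    using Fm_holo Fm_p eqv main by blast
qed


end
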